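(* Let $n\ge 2$, $q=e^{2\pi i/6}$, and let $\varphi:\mathcal{H}_n(q)\to Q_n$ be the algebra homomorphism with $\varphi(g_i)=s_i$. Then the functional $a\mapsto \mathrm{Tr}(\varphi(a))$ on $\mathcal{H}_n(q)$ equals the Markov trace $\mathrm{tr}$ with parameter $\eta=1/2$; in particular $\mathrm{Tr}(f_{n-1})=1/2$ where $f_{n-1}=\varphi(e_{n-1})=(q-s_{n-1})/(1+q)$, and $\mathrm{Tr}(f_{n-1}b)=\mathrm{Tr}(f_{n-1})\mathrm{Tr}(b)$ for all $b$ in the subalgebra generated by $u_1,v_1,\dots,u_{n-2},v_{n-2}$.
   Context: $Q_n$ is the $\mathbb{C}$-algebra with generators $u_1,v_1,\dots,u_{n-1},v_{n-1}$ and relations (G1) $u_i^2=v_i^2=-1$; (G2) $[u_i,v_j]=-1$ if $|i-j|\le1$; (G3) $[u_i,v_j]=1$ if $|i-j|\ge2$; (G4) $[u_i,u_j]=[v_i,v_j]=1$, with $[a,b]=aba^{-1}b^{-1}$. Every word in the generators equals $\pm$ a unique basis word $u_1^{\epsilon_1}\cdots u_{n-1}^{\epsilon_{n-1}}v_1^{\nu_1}\cdots v_{n-1}^{\nu_{n-1}}$ ($\epsilon_i,\nu_i\in\{0,1\}$); $\mathrm{Tr}$ is the linear functional with $\mathrm{Tr}(1)=1$ and $\mathrm{Tr}(w)=0$ for non-identity basis words $w$. $s_i=\frac{-1}{2q}(1+u_i+v_i+u_iv_i)$; these satisfy the braid relations and $(s_i-q)(s_i+1)=0$, so $\varphi$ is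 well defined. The Hecke algebra $\mathcal{H}_n(q)$ has generators $g_1,\dots,g_{n-1}$ with relations $g_ig_{i+1}g_i=g_{i+1}g_ig_{i+1}$, $g_ig_j=g_jg_i$ ($|i-j|>1$), $(g_i+1)(g_i-q)=0$; $e_i=(q-g_i)/(1+q)$. The Markov trace with parameter $\eta$ is the unique linear functional $\mathrm{tr}$ on $\bigcup_n\mathcal{H}_n(q)$ with $\mathrm{tr}(1)=1$, $\mathrm{tr}(ab)=\mathrm{tr}(ba)$, $\mathrm{tr}(xe_n)=\eta\,\mathrm{tr}(x)$ for $x\in\mathcal{H}_n(q)$. *)

theory Defs
  imports Complex_Main
begin

text \<open>A basis word u_1^e_1 ... u_(n-1)^e_(n-1) v_1^v_1 ... v_(n-1)^v_(n-1) is encoded by the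
pair (E, N) of index sets E = {i. e_i = 1}, N = {i. v_i = 1}, both subsets of {1..<n}.
An element of Q_n is a complex-valued function on such pairs (its coordinates in the basis).\<close>

type_synonym qelem = "nat set \<times> nat set \<Rightarrow> complex"

definition qbasis :: "nat \<Rightarrow> (nat set \<times> nat set) set" where
  "qbasis n = Pow {1..<n} \<times> Pow {1..<n}"

text \<open>Sign exponent arising from the relations (G1)-(G4) when multiplying
u^E v^N by u^E' v^N': moving u_i (i in E') left past v_j (j in N) gives a factor -1 iff
abs(i-j) <= 1; u_i^2 = v_i^2 = -1 gives a factor -1 for each common index.\<close>
definition qsign_exp :: "nat set \<times> nat set \<Rightarrow> nat set \<times> nat set \<Rightarrow> nat" where
  "qsign_exp p p' = card {(i, j). i \<in> fst p' \<and> j \<in> snd p \<and> i \<le> j + 1 \<and> j \<le> i + 1}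
     + card (fst p \<inter> fst p') + card (snd p \<inter> snd p')"

definition symd :: "'a set \<Rightarrow> 'a set \<Rightarrow> 'a set" where
  "symd A B = (A - B) \<union> (B - A)"

definition qmult :: "nat \<Rightarrow> qelem \<Rightarrow> qelem \<Rightarrow> qelem" where
  "qmult n x y = (\<lambda>c. \<Sum>p\<in>qbasis n. \<Sum>p'\<in>qbasis n.
      if (symd (fst p) (fst p'), symd (snd p) (snd p')) = c
      then (-1) ^ qsign_exp p p' * x p * y p' else 0)"

definition qbw :: "nat set \<Rightarrow> nat set \<Rightarrow> qelem" where
  "qbw E N = (\<lambda>c. if c = (E, N) then 1 else 0)"

definition qone :: qelem where "qone = qbw {} {}"
definition qu :: "nat \<Rightarrow> qelem" where "qu i = qbw {i} {}"
definition qv :: "nat \<Rightarrow> qelem" where "qv i = qbw {} {i}"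

definition qadd :: "qelem \<Rightarrow> qelem \<Rightarrow> qelem" where "qadd x y = (\<lambda>c. x c + y c)"
definition qscale :: "complex \<Rightarrow> qelem \<Rightarrow> qelem" where "qscale a x = (\<lambda>c. a * x c)"

definition Tr :: "qelem \<Rightarrow> complex" where "Tr x = x ({}, {})"

definition qs :: "complex \<Rightarrow> nat \<Rightarrow> nat \<Rightarrow> qelem" where
  "qs q n i = qscale (-1 / (2 * q))
     (qadd (qadd qone (qu i)) (qadd (qv i) (qmult n (qu i) (qv i))))"

definition qphi :: "complex \<Rightarrow> nat \<Rightarrow> nat list \<Rightarrow> qelem" where
  "qphi q n w = foldr (\<lambda>i acc. qmult n (qs q n i) acc) w qone"

definition qf :: "complex \<Rightarrow> nat \<Rightarrow> nat \<Rightarrow> qelem" where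
  "qf q n i = qscale (1 / (1 + q)) (qadd (qscale q qone) (qscale (-1) (qs q n i)))"

inductive_set qsubalg :: "nat \<Rightarrow> nat \<Rightarrow> qelem set" for n k where
  one: "qone \<in> qsubalg n k"
| genu: "1 \<le> i \<Longrightarrow> i < k \<Longrightarrow> qu i \<in> qsubalg n k"
| genv: "1 \<le> i \<Longrightarrow> i < k \<Longrightarrow> qv i \<in> qsubalg n k"
| add: "x \<in> qsubalg n k \<Longrightarrow> y \<in> qsubalg n k \<Longrightarrow> qadd x y \<in> qsubalg n k"
| scale: "x \<in> qsubalg n k \<Longrightarrow> qscale a x \<in> qsubalg n k"
| mult: "x \<in> qsubalg n k \<Longrightarrow> y \<in> qsubalg n k \<Longrightarrow> qmult n x y \<in> qsubalg n k"

text \<open>A word [i_1,...,i_k] (all i_j >= 1) stands for g_(i_1) ... g_(i_k) in the union of the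
Hecke algebras. Linear functionals on the free algebra are given by their values on words;
such a functional descends to the Hecke algebra iff it vanishes on a r b for all words a, b
and all defining relations r.\<close>

definition posw :: "nat list \<Rightarrow> bool" where "posw w \<longleftrightarrow> (\<forall>i\<in>set w. 1 \<le> i)"

definition hecke_functional :: "complex \<Rightarrow> (nat list \<Rightarrow> complex) \<Rightarrow> bool" where
  "hecke_functional q \<tau> \<longleftrightarrow> (\<forall>a b i j. posw a \<and> posw b \<and> 1 \<le> i \<and> 1 \<le> j \<longrightarrow>
      \<tau> (a @ [i, Suc i, i] @ b) = \<tau> (a @ [Suc i, i, Suc i] @ b) \<and>
      (Suc i < j \<longrightarrow> \<tau> (a @ [i, j] @ b) = \<tau> (a @ [j, i] @ b)) \<and>
      \<tau> (a @ [i, i] @ b) = (q - 1) * \<tau> (a @ [i] @ b) + q * \<tau> (a @ b))"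

text \<open>Markov trace with parameter eta: tr(1)=1, tr(ab)=tr(ba), tr(x e_n) = eta tr(x) for
x in H_n (words in g_1..g_(n-1)), where e_n = (q - g_n)/(1+q); by linearity it suffices to
impose these on words.\<close>
definition markov_trace :: "complex \<Rightarrow> complex \<Rightarrow> (nat list \<Rightarrow> complex) \<Rightarrow> bool" where
  "markov_trace q \<eta> \<tau> \<longleftrightarrow> hecke_functional q \<tau> \<and> \<tau> [] = 1 \<and>
     (\<forall>a b. posw a \<and> posw b \<longrightarrow> \<tau> (a @ b) = \<tau> (b @ a)) \<and>
     (\<forall>n x. 1 \<le> n \<and> set x \<subseteq> {1..<n} \<longrightarrow>
        (q * \<tau> x - \<tau> (x @ [n])) / (1 + q) = \<eta> * \<tau> x)"

definition q6 :: complex where "q6 = exp (2 * of_real pi * \<i> / 6)"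

end

theory Submission
  imports Defs
begin


definition psymd :: "nat set \<times> nat set \<Rightarrow> nat set \<times> nat set \<Rightarrow> nat set \<times> nat set" where
  "psymd p p' = (symd (fst p) (fst p'), symd (snd p) (snd p'))"

lemma symd_symd[simp]: "symd A (symd A C) = C"
  unfolding symd_def by auto
lemma symd_eq_iff: "symd A B = C \<longleftrightarrow> B = symd A C"
  unfolding symd_def by auto
lemma psymd_psymd[simp]: "psymd p (psymd p c) = c"
  unfolding psymd_def by (cases p; cases c) simp
lemma psymd_eq_iff: "psymd p p' = c \<longleftrightarrow> p' = psymd p c"
  unfolding psymd_def by (cases p; cases p'; cases c) (auto simp: symd_eq_iff)
lemma symd_sub: "A \<subseteq> S \<Longrightarrow> B \<subseteq> S \<Longrightarrow> symd A B \<subseteq> S"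
  unfolding symd_def by auto
lemma psymd_basis: "p \<in> qbasis n \<Longrightarrow> c \<in> qbasis n \<Longrightarrow> psymd p c \<in> qbasis n"
  unfolding psymd_def qbasis_def by (cases p; cases c) (auto simp: symd_def)
lemma psymd_basis_iff: "p \<in> qbasis n \<Longrightarrow> psymd p c \<in> qbasis n \<longleftrightarrow> c \<in> qbasis n"
  by (metis psymd_basis psymd_psymd)
lemma finite_qbasis[simp]: "finite (qbasis n)"
  unfolding qbasis_def by simp
lemma psymd_empty[simp]: "psymd p ({},{}) = p"
  unfolding psymd_def symd_def by (cases p) simp
lemma psymd_self[simp]: "psymd p p = ({},{})"
  unfolding psymd_def symd_def by simp
lemma psymd_comm: "psymd p c = psymd c p"
  unfolding psymd_def symd_def by auto
lemma psymd_assoc: "psymd (psymd p r) (psymd p c) = psymd r c"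
  unfolding psymd_def symd_def by auto

lemma qmult_alt: "qmult n x y c = (if c \<in> qbasis n then
   (\<Sum>p\<in>qbasis n. (-1) ^ qsign_exp p (psymd p c) * x p * y (psymd p c)) else 0)"
proof -
  have inner: "(\<Sum>p'\<in>qbasis n. if psymd p p' = c then (-1) ^ qsign_exp p p' * x p * y p' else 0)
     = (if c \<in> qbasis n then (-1) ^ qsign_exp p (psymd p c) * x p * y (psymd p c) else 0)"
    if "p \<in> qbasis n" for p
  proof -
    have "(\<Sum>p'\<in>qbasis n. if psymd p p' = c then (-1) ^ qsign_exp p p' * x p * y p' else 0)
       = (\<Sum>p'\<in>qbasis n. if p' = psymd p c then (-1) ^ qsign_exp p p' * x p * y p' else 0)"
      by (simp add: psymd_eq_iff)
    also have "\<dots> = (if psymd p c \<in> qbasis n then (-1) ^ qsign_exp p (psymd p c) * x p * y (psymd p c) else 0)"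
      by (simp add: sum.delta')
    finally show ?thesis using psymd_basis_iff[OF that] by simp
  qed
  have "qmult n x y c = (\<Sum>p\<in>qbasis n. \<Sum>p'\<in>qbasis n. if psymd p p' = c then (-1) ^ qsign_exp p p' * x p * y p' else 0)"
    unfolding qmult_def psymd_def by simp
  also have "\<dots> = (\<Sum>p\<in>qbasis n. (if c \<in> qbasis n then (-1) ^ qsign_exp p (psymd p c) * x p * y (psymd p c) else 0))"
    by (rule sum.cong) (auto simp: inner)
  finally show ?thesis by simp
qed

lemma card_symd: "finite X \<Longrightarrow> finite Y \<Longrightarrow> card (symd X Y) + 2 * card (X \<inter> Y) = card X + card Y"
proof -
  assume f: "finite X" "finite Y"
  have "symd X Y = (X \<union> Y) - (X \<inter> Y)" unfolding symd_def by auto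
  then have "card (symd X Y) = card (X \<union> Y) - card (X \<inter> Y)"
    using card_Diff_subset[of "X \<inter> Y" "X \<union> Y"] f by auto
  moreover have "card (X \<union> Y) + card (X \<inter> Y) = card X + card Y" using f by (rule card_Un_Int[symmetric])
  moreover have "card (X \<inter> Y) \<le> card (X \<union> Y)" using f by (intro card_mono) auto
  ultimately show ?thesis by linarith
qed
lemma card_symd_mod: "finite X \<Longrightarrow> finite Y \<Longrightarrow> card (symd X Y) mod 2 = (card X + card Y) mod 2"
proof -
  assume f: "finite X" "finite Y"
  have "(card (symd X Y) + 2 * card (X \<inter> Y)) mod 2 = (card X + card Y) mod 2"
    using card_symd[OF f] by simp
  then show ?thesis by simp
qed

definition Padj :: "nat set \<Rightarrow> nat set \<Rightarrow> (nat \<times> nat) set" where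
  "Padj E N = {(i, j). i \<in> E \<and> j \<in> N \<and> i \<le> j + 1 \<and> j \<le> i + 1}"

lemma qsign_exp_alt: "qsign_exp p p' = card (Padj (fst p') (snd p)) + card (fst p \<inter> fst p') + card (snd p \<inter> snd p')"
  unfolding qsign_exp_def Padj_def by simp

lemma Padj_fin: "finite E \<Longrightarrow> finite N \<Longrightarrow> finite (Padj E N)"
  unfolding Padj_def by (rule finite_subset[of _ "E \<times> N"]) auto
lemma Padj_symd1: "Padj (symd E1 E2) N = symd (Padj E1 N) (Padj E2 N)"
  unfolding Padj_def symd_def by auto
lemma Padj_symd2: "Padj E (symd N1 N2) = symd (Padj E N1) (Padj E N2)"
  unfolding Padj_def symd_def by auto
lemma Int_symd1: "symd A B \<inter> C = symd (A \<inter> C) (B \<inter> C)" unfolding symd_def by auto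
lemma Int_symd2: "C \<inter> symd A B = symd (C \<inter> A) (C \<inter> B)" unfolding symd_def by auto

lemma basis_fin: "p \<in> qbasis n \<Longrightarrow> finite (fst p) \<and> finite (snd p)"
proof -
  assume "p \<in> qbasis n"
  then have "fst p \<subseteq> {1..<n}" "snd p \<subseteq> {1..<n}" unfolding qbasis_def by (auto simp: mem_Times_iff)
  then show ?thesis by (meson finite_subset finite_atLeastLessThan)
qed

lemma mod2_odd: "(x::nat) mod 2 = (y + z) mod 2 \<Longrightarrow> odd x \<longleftrightarrow> \<not> (odd y \<longleftrightarrow> odd z)"
  by (metis odd_add even_iff_mod_2_eq_zero)
lemma xor3: "a = (\<not> (a1 \<longleftrightarrow> a2)) \<Longrightarrow> b = (\<not> (b1 \<longleftrightarrow> b2)) \<Longrightarrow> c = (\<not> (c1 \<longleftrightarrow> c2)) \<Longrightarrow>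
  (\<not> (\<not> (a \<longleftrightarrow> b) \<longleftrightarrow> c)) = (\<not> ((\<not> (\<not> (a1 \<longleftrightarrow> b1) \<longleftrightarrow> c1)) \<longleftrightarrow> (\<not> (\<not> (a2 \<longleftrightarrow> b2) \<longleftrightarrow> c2))))"
  by (cases a1; cases a2; cases b1; cases b2; cases c1; cases c2) simp_all

lemma sig_lin2:
  assumes "a \<in> qbasis n" "b \<in> qbasis n" "b' \<in> qbasis n"
  shows "odd (qsign_exp a (psymd b b')) \<longleftrightarrow> \<not> (odd (qsign_exp a b) \<longleftrightarrow> odd (qsign_exp a b'))"
proof -
  note f = basis_fin[OF assms(1)] basis_fin[OF assms(2)] basis_fin[OF assms(3)]
  have 1: "card (Padj (symd (fst b) (fst b')) (snd a)) mod 2 = (card (Padj (fst b) (snd a)) + card (Padj (fst b') (snd a))) mod 2"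
    unfolding Padj_symd1 using f by (intro card_symd_mod Padj_fin) auto
  have 2: "card (fst a \<inter> symd (fst b) (fst b')) mod 2 = (card (fst a \<inter> fst b) + card (fst a \<inter> fst b')) mod 2"
    unfolding Int_symd2 using f by (intro card_symd_mod) auto
  have 3: "card (snd a \<inter> symd (snd b) (snd b')) mod 2 = (card (snd a \<inter> snd b) + card (snd a \<inter> snd b')) mod 2"
    unfolding Int_symd2 using f by (intro card_symd_mod) auto
  show ?thesis unfolding qsign_exp_alt psymd_def fst_conv snd_conv odd_add
    using xor3[OF mod2_odd[OF 1] mod2_odd[OF 2] mod2_odd[OF 3]] .
qed

lemma sig_lin1:
  assumes "a \<in> qbasis n" "a' \<in> qbasis n" "b \<in> qbasis n"
  shows "odd (qsign_exp (psymd a a') b) \<longleftrightarrow> \<not> (odd (qsign_exp a b) \<longleftrightarrow> odd (qsign_exp a' b))"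
proof -
  note f = basis_fin[OF assms(1)] basis_fin[OF assms(2)] basis_fin[OF assms(3)]
  have 1: "card (Padj (fst b) (symd (snd a) (snd a'))) mod 2 = (card (Padj (fst b) (snd a)) + card (Padj (fst b) (snd a'))) mod 2"
    unfolding Padj_symd2 using f by (intro card_symd_mod Padj_fin) auto
  have 2: "card (symd (fst a) (fst a') \<inter> fst b) mod 2 = (card (fst a \<inter> fst b) + card (fst a' \<inter> fst b)) mod 2"
    unfolding Int_symd1 using f by (intro card_symd_mod) auto
  have 3: "card (symd (snd a) (snd a') \<inter> snd b) mod 2 = (card (snd a \<inter> snd b) + card (snd a' \<inter> snd b)) mod 2"
    unfolding Int_symd1 using f by (intro card_symd_mod) auto
  show ?thesis unfolding qsign_exp_alt psymd_def fst_conv snd_conv odd_add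
    using xor3[OF mod2_odd[OF 1] mod2_odd[OF 2] mod2_odd[OF 3]] .
qed

lemma neg1_pow_mod: "(odd a \<longleftrightarrow> odd b) \<Longrightarrow> (-1::complex) ^ a = (-1) ^ b"
  by (simp add: minus_one_power_iff)


lemma xor_aux: "(A::bool) = (\<not> (rr \<longleftrightarrow> rc)) \<Longrightarrow> B = (\<not> (pp \<longleftrightarrow> pr)) \<Longrightarrow> C = (\<not> (pp \<longleftrightarrow> pc)) \<Longrightarrow> D = (\<not> (X \<longleftrightarrow> A))
   \<Longrightarrow> X = (\<not> (pr \<longleftrightarrow> pc)) \<Longrightarrow> (\<not> (A \<longleftrightarrow> B)) = (\<not> (C \<longleftrightarrow> D))"
  by (cases rr; cases rc; cases pp; cases pr; cases pc) simp_all

lemma cocycle: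
  assumes "p \<in> qbasis n" "r \<in> qbasis n" "c \<in> qbasis n"
  shows "(-1::complex) ^ qsign_exp r (psymd r c) * (-1) ^ qsign_exp p (psymd p r)
       = (-1) ^ qsign_exp p (psymd p c) * (-1) ^ qsign_exp (psymd p r) (psymd r c)"
proof -
  have rc: "psymd r c \<in> qbasis n" using assms psymd_basis by blast
  note 1 = sig_lin2[OF assms(2) assms(2) assms(3)]
  note 2 = sig_lin2[OF assms(1) assms(1) assms(2)]
  note 3 = sig_lin2[OF assms(1) assms(1) assms(3)]
  note 4 = sig_lin1[OF assms(1) assms(2) rc]
  note 5 = sig_lin2[OF assms(1) assms(2) assms(3)]
  have "odd (qsign_exp r (psymd r c) + qsign_exp p (psymd p r)) \<longleftrightarrow> odd (qsign_exp p (psymd p c) + qsign_exp (psymd p r) (psymd r c))"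
    unfolding odd_add using xor_aux[OF 1 2 3 4 5] .
  then have "(-1::complex)^(qsign_exp r (psymd r c) + qsign_exp p (psymd p r)) = (-1) ^ (qsign_exp p (psymd p c) + qsign_exp (psymd p r) (psymd r c))"
    by (rule neg1_pow_mod)
  then show ?thesis by (simp only: power_add)
qed

lemma qmult_assoc: "qmult n (qmult n x y) z = qmult n x (qmult n y z)"
proof
  fix c
  show "qmult n (qmult n x y) z c = qmult n x (qmult n y z) c"
  proof (cases "c \<in> qbasis n")
    case False then show ?thesis by (simp add: qmult_alt)
  next
    case c: True
    define s where "s a b = (-1::complex) ^ qsign_exp a b" for a b
    have L: "qmult n (qmult n x y) z c = (\<Sum>r\<in>qbasis n. \<Sum>p\<in>qbasis n.
        s r (psymd r c) * s p (psymd p r) * x p * y (psymd p r) * z (psymd r c))"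
    proof -
      have "qmult n (qmult n x y) z c = (\<Sum>r\<in>qbasis n. s r (psymd r c) * qmult n x y r * z (psymd r c))"
        using c by (simp add: qmult_alt[of n _ _ c] s_def)
      also have "\<dots> = (\<Sum>r\<in>qbasis n. s r (psymd r c) * (\<Sum>p\<in>qbasis n. s p (psymd p r) * x p * y (psymd p r)) * z (psymd r c))"
        by (intro sum.cong refl) (simp add: qmult_alt[of n x y] s_def)
      also have "\<dots> = (\<Sum>r\<in>qbasis n. \<Sum>p\<in>qbasis n. s r (psymd r c) * s p (psymd p r) * x p * y (psymd p r) * z (psymd r c))"
        by (intro sum.cong refl) (simp add: sum_distrib_left sum_distrib_right mult.assoc)
      finally show ?thesis .
    qed
    have R: "qmult n x (qmult n y z) c = (\<Sum>p\<in>qbasis n. \<Sum>r\<in>qbasis n.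
        s p (psymd p c) * s (psymd p r) (psymd r c) * x p * y (psymd p r) * z (psymd r c))"
    proof -
      have "qmult n x (qmult n y z) c = (\<Sum>p\<in>qbasis n. s p (psymd p c) * x p *
          (\<Sum>t\<in>qbasis n. s t (psymd t (psymd p c)) * y t * z (psymd t (psymd p c))))"
        using c by (simp add: qmult_alt[of n _ _ c] qmult_alt[of n y z] s_def psymd_basis mult.assoc cong: sum.cong)
      also have "\<dots> = (\<Sum>p\<in>qbasis n. s p (psymd p c) * x p *
          (\<Sum>r\<in>qbasis n. s (psymd p r) (psymd r c) * y (psymd p r) * z (psymd r c)))"
      proof (rule sum.cong[OF refl])
        fix p assume p: "p \<in> qbasis n"
        have "(\<Sum>t\<in>qbasis n. s t (psymd t (psymd p c)) * y t * z (psymd t (psymd p c)))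
            = (\<Sum>r\<in>qbasis n. s (psymd p r) (psymd (psymd p r) (psymd p c)) * y (psymd p r) * z (psymd (psymd p r) (psymd p c)))"
          by (rule sum.reindex_bij_witness[of _ "psymd p" "psymd p"]) (auto simp: psymd_basis p)
        then show "s p (psymd p c) * x p * (\<Sum>t\<in>qbasis n. s t (psymd t (psymd p c)) * y t * z (psymd t (psymd p c)))
           = s p (psymd p c) * x p * (\<Sum>r\<in>qbasis n. s (psymd p r) (psymd r c) * y (psymd p r) * z (psymd r c))"
          by (simp add: psymd_assoc)
      qed
      also have "\<dots> = (\<Sum>p\<in>qbasis n. \<Sum>r\<in>qbasis n.
        s p (psymd p c) * s (psymd p r) (psymd r c) * x p * y (psymd p r) * z (psymd r c))"
        by (intro sum.cong refl) (simp add: sum_distrib_left mult.assoc mult.left_commute)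
      finally show ?thesis .
    qed
    have "qmult n (qmult n x y) z c = (\<Sum>p\<in>qbasis n. \<Sum>r\<in>qbasis n.
        s r (psymd r c) * s p (psymd p r) * x p * y (psymd p r) * z (psymd r c))"
      unfolding L by (rule sum.swap)
    also have "\<dots> = qmult n x (qmult n y z) c" unfolding R
    proof (intro sum.cong refl)
      fix p r assume pr: "p \<in> qbasis n" "r \<in> qbasis n"
      have e: "s r (psymd r c) * s p (psymd p r) = s p (psymd p c) * s (psymd p r) (psymd r c)"
        unfolding s_def using cocycle[OF pr(1) pr(2) c] .
      show "s r (psymd r c) * s p (psymd p r) * x p * y (psymd p r) * z (psymd r c) =
        s p (psymd p c) * s (psymd p r) (psymd r c) * x p * y (psymd p r) * z (psymd r c)"
        by (simp only: e)
    qed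
    finally show ?thesis .
  qed
qed


definition supp :: "nat \<Rightarrow> qelem \<Rightarrow> bool" where
  "supp n x \<longleftrightarrow> (\<forall>c. c \<notin> qbasis n \<longrightarrow> x c = 0)"

lemma empty_basis[simp]: "({}, {}) \<in> qbasis n" unfolding qbasis_def by simp

lemma qmult_supp: "supp n (qmult n x y)"
  unfolding supp_def by (simp add: qmult_alt)

lemma supp_qone: "supp n qone"
  unfolding supp_def qone_def qbw_def by auto

lemma psymd_empty_left[simp]: "psymd ({},{}) c = c"
  using psymd_comm psymd_empty by metis

lemma qsign_empty_left[simp]: "qsign_exp ({},{}) c = 0"
  unfolding qsign_exp_def by simp
lemma qsign_empty_right[simp]: "qsign_exp c ({},{}) = 0"
  unfolding qsign_exp_def by simp

lemma qmult_one_left: "supp n x \<Longrightarrow> qmult n qone x = x"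
proof
  fix c assume s: "supp n x"
  show "qmult n qone x c = x c"
  proof (cases "c \<in> qbasis n")
    case True
    have "qmult n qone x c = (\<Sum>p\<in>qbasis n. (-1) ^ qsign_exp p (psymd p c) * qone p * x (psymd p c))"
      using True by (simp add: qmult_alt)
    also have "\<dots> = (\<Sum>p\<in>qbasis n. if p = ({},{}) then x c else 0)"
      by (rule sum.cong) (auto simp: qone_def qbw_def)
    also have "\<dots> = x c" by (simp add: sum.delta')
    finally show ?thesis .
  qed (use s in \<open>simp add: qmult_alt supp_def del: split_paired_All\<close>)
qed

lemma qmult_one_right: "supp n x \<Longrightarrow> qmult n x qone = x"
proof
  fix c assume s: "supp n x"
  show "qmult n x qone c = x c"
  proof (cases "c \<in> qbasis n")
    case True
    have "qmult n x qone c = (\<Sum>p\<in>qbasis n. (-1) ^ qsign_exp p (psymd p c) * x p * qone (psymd p c))"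
      using True by (simp add: qmult_alt)
    also have "\<dots> = (\<Sum>p\<in>qbasis n. if p = c then x c else 0)"
    proof (rule sum.cong[OF refl])
      fix p
      have "psymd p c = ({},{}) \<longleftrightarrow> p = c" by (metis psymd_empty psymd_eq_iff psymd_self)
      then show "(-1) ^ qsign_exp p (psymd p c) * x p * qone (psymd p c) = (if p = c then x c else 0)"
        by (auto simp: qone_def qbw_def)
    qed
    also have "\<dots> = x c" using True by (simp add: sum.delta')
    finally show ?thesis .
  qed (use s in \<open>simp add: qmult_alt supp_def del: split_paired_All\<close>)
qed

lemma qmult_qadd_left: "qmult n (qadd x y) z = qadd (qmult n x z) (qmult n y z)"
  by (rule ext) (simp add: qmult_alt qadd_def sum.distrib algebra_simps)
lemma qmult_qadd_right: "qmult n x (qadd y z) = qadd (qmult n x y) (qmult n x z)"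
  by (rule ext) (simp add: qmult_alt qadd_def sum.distrib algebra_simps)
lemma qmult_qscale_left: "qmult n (qscale a x) z = qscale a (qmult n x z)"
  by (rule ext) (simp add: qmult_alt qscale_def sum_distrib_left algebra_simps)
lemma qmult_qscale_right: "qmult n x (qscale a z) = qscale a (qmult n x z)"
  by (rule ext) (simp add: qmult_alt qscale_def sum_distrib_left algebra_simps)

lemma Tr_qmult: "Tr (qmult n x y) = (\<Sum>p\<in>qbasis n. (-1) ^ qsign_exp p p * x p * y p)"
  unfolding Tr_def by (simp add: qmult_alt)
lemma Tr_comm: "Tr (qmult n x y) = Tr (qmult n y x)"
  unfolding Tr_qmult by (simp add: ac_simps)
lemma Tr_qadd[simp]: "Tr (qadd x y) = Tr x + Tr y" unfolding Tr_def qadd_def by simp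
lemma Tr_qscale[simp]: "Tr (qscale a x) = a * Tr x" unfolding Tr_def qscale_def by simp

lemma qbw_mult:
  assumes "a \<in> qbasis n" "b \<in> qbasis n"
  shows "qmult n (qbw (fst a) (snd a)) (qbw (fst b) (snd b))
       = qscale ((-1) ^ qsign_exp a b) (qbw (fst (psymd a b)) (snd (psymd a b)))"
proof
  fix c
  show "qmult n (qbw (fst a) (snd a)) (qbw (fst b) (snd b)) c
       = qscale ((-1) ^ qsign_exp a b) (qbw (fst (psymd a b)) (snd (psymd a b))) c"
  proof (cases "c \<in> qbasis n")
    case True
    have "qmult n (qbw (fst a) (snd a)) (qbw (fst b) (snd b)) c
        = (\<Sum>p\<in>qbasis n. (-1) ^ qsign_exp p (psymd p c) * qbw (fst a) (snd a) p * qbw (fst b) (snd b) (psymd p c))"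
      using True by (simp add: qmult_alt)
    also have "\<dots> = (\<Sum>p\<in>qbasis n. if p = a then (if c = psymd a b then (-1) ^ qsign_exp a b else 0) else 0)"
    proof (rule sum.cong[OF refl])
      fix p
      have e: "psymd a c = b \<longleftrightarrow> c = psymd a b" by (metis psymd_psymd)
      show "(-1) ^ qsign_exp p (psymd p c) * qbw (fst a) (snd a) p * qbw (fst b) (snd b) (psymd p c) =
          (if p = a then (if c = psymd a b then (-1) ^ qsign_exp a b else 0) else 0)"
        using e by (auto simp: qbw_def)
    qed
    also have "\<dots> = (if c = psymd a b then (-1) ^ qsign_exp a b else 0)"
      using assms by (simp add: sum.delta')
    finally show ?thesis by (simp add: qscale_def qbw_def)
  next
    case False
    then have "c \<noteq> psymd a b" using psymd_basis assms by blast
    then show ?thesis using False by (simp add: qmult_alt qscale_def qbw_def)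
  qed
qed

definition st :: "nat \<Rightarrow> nat \<Rightarrow> bool \<Rightarrow> bool \<Rightarrow> nat set" where
  "st i j a b = {x. x = i \<and> a \<or> x = j \<and> b}"

fun lp :: "nat \<Rightarrow> nat \<Rightarrow> bool \<times> bool \<times> bool \<times> bool \<Rightarrow> nat set \<times> nat set" where
  "lp i j (e1, e2, n1, n2) = (st i j e1 e2, st i j n1 n2)"

fun pxor :: "bool \<times> bool \<times> bool \<times> bool \<Rightarrow> bool \<times> bool \<times> bool \<times> bool \<Rightarrow> bool \<times> bool \<times> bool \<times> bool" where
  "pxor (e1, e2, n1, n2) (e1', e2', n1', n2') = (e1 \<noteq> e1', e2 \<noteq> e2', n1 \<noteq> n1', n2 \<noteq> n2')"

fun lsig :: "bool \<Rightarrow> bool \<times> bool \<times> bool \<times> bool \<Rightarrow> bool \<times> bool \<times> bool \<times> bool \<Rightarrow> nat" where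
  "lsig adj (e1, e2, n1, n2) (e1', e2', n1', n2') =
     of_bool (e1' \<and> n1) + of_bool (e2' \<and> n2) + (if adj then of_bool (e1' \<and> n2) + of_bool (e2' \<and> n1) else 0)
     + of_bool (e1 \<and> e1') + of_bool (e2 \<and> e2') + of_bool (n1 \<and> n1') + of_bool (n2 \<and> n2')"

definition lw :: "nat \<Rightarrow> nat \<Rightarrow> bool \<times> bool \<times> bool \<times> bool \<Rightarrow> qelem" where
  "lw i j p = qbw (fst (lp i j p)) (snd (lp i j p))"

lemma st_symd: "i \<noteq> j \<Longrightarrow> symd (st i j a b) (st i j a' b') = st i j (a \<noteq> a') (b \<noteq> b')"
  unfolding st_def symd_def by auto
lemma st_int: "i \<noteq> j \<Longrightarrow> st i j a b \<inter> st i j a' b' = st i j (a \<and> a') (b \<and> b')"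
  unfolding st_def by auto
lemma st_FF[simp]: "st i j False False = {}" unfolding st_def by simp
lemma st_TF[simp]: "st i j True False = {i}" unfolding st_def by auto
lemma st_FT[simp]: "st i j False True = {j}" unfolding st_def by auto
lemma st_TT[simp]: "st i j True True = {i, j}" unfolding st_def by auto
lemma st_card: "i \<noteq> j \<Longrightarrow> card (st i j a b) = of_bool a + of_bool b"
  by (cases a; cases b) auto

lemma Padj_st:
  assumes "i \<noteq> j"
  shows "card (Padj (st i j e1 e2) (st i j n1 n2)) =
     of_bool (e1 \<and> n1) + of_bool (e2 \<and> n2) + (if i \<le> j + 1 \<and> j \<le> i + 1 then of_bool (e1 \<and> n2) + of_bool (e2 \<and> n1) else 0)"
proof -
  define adj where "adj = (i \<le> j + 1 \<and> j \<le> i + 1)"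
  have adj': "(j \<le> i + 1 \<and> i \<le> j + 1) = adj" unfolding adj_def by auto
  have "Padj (st i j e1 e2) (st i j n1 n2) = (if e1 \<and> n1 then {(i,i)} else {}) \<union> (if e2 \<and> n2 then {(j,j)} else {})
     \<union> (if e1 \<and> n2 \<and> adj then {(i,j)} else {}) \<union> (if e2 \<and> n1 \<and> adj then {(j,i)} else {})"
    unfolding Padj_def st_def adj_def by auto
  moreover have "card ((if e1 \<and> n1 then {(i,i)} else {}) \<union> (if e2 \<and> n2 then {(j,j)} else {})
     \<union> (if e1 \<and> n2 \<and> adj then {(i,j)} else {}) \<union> (if e2 \<and> n1 \<and> adj then {(j,i)} else {})) =
     of_bool (e1 \<and> n1) + of_bool (e2 \<and> n2) + (if adj then of_bool (e1 \<and> n2) + of_bool (e2 \<and> n1) else 0)"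
    using assms by (cases e1; cases e2; cases n1; cases n2; cases adj) (auto simp: card_insert_if)
  ultimately show ?thesis unfolding adj_def by simp
qed

lemma lp_psymd: "i \<noteq> j \<Longrightarrow> psymd (lp i j p) (lp i j p') = lp i j (pxor p p')"
  by (cases p; cases p') (simp add: psymd_def st_symd)

lemma lp_sig: "i \<noteq> j \<Longrightarrow> qsign_exp (lp i j p) (lp i j p') = lsig (i \<le> j + 1 \<and> j \<le> i + 1) p p'"
  by (cases p; cases p') (simp add: qsign_exp_alt st_int st_card Padj_st)

lemma lw_mult:
  assumes "i \<noteq> j" "lp i j p \<in> qbasis n" "lp i j p' \<in> qbasis n"
  shows "qmult n (lw i j p) (lw i j p') = qscale ((-1) ^ lsig (i \<le> j + 1 \<and> j \<le> i + 1) p p') (lw i j (pxor p p'))"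
  unfolding lw_def using qbw_mult[OF assms(2,3)] by (simp add: lp_psymd lp_sig assms(1))

lemma lp_basis: "lp i j (e1, e2, n1, n2) \<in> qbasis n \<longleftrightarrow>
   ((e1 \<or> n1) \<longrightarrow> 0 < i \<and> i < n) \<and> ((e2 \<or> n2) \<longrightarrow> 0 < j \<and> j < n)"
  by (cases e1; cases e2; cases n1; cases n2) (auto simp: qbasis_def)

lemma st_inj: "i \<noteq> j \<Longrightarrow> st i j a b = st i j a' b' \<longleftrightarrow> a = a' \<and> b = b'"
  unfolding st_def by (auto simp: set_eq_iff)

lemma lp_inj: "i \<noteq> j \<Longrightarrow> lp i j p = lp i j p' \<longleftrightarrow> p = p'"
  by (cases p; cases p') (simp add: st_inj)

lemma lw_apply: "lw i j p c = (if c = lp i j p then 1 else 0)"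
  unfolding lw_def qbw_def by (cases "lp i j p") auto

lemma lw_one: "qone = lw i j (False, False, False, False)" unfolding qone_def lw_def by simp
lemma lw_ui: "qu i = lw i j (True, False, False, False)" unfolding qu_def lw_def by simp
lemma lw_vi: "qv i = lw i j (False, False, True, False)" unfolding qv_def lw_def by simp
lemma lw_uj: "qu j = lw i j (False, True, False, False)" unfolding qu_def lw_def by simp
lemma lw_vj: "qv j = lw i j (False, False, False, True)" unfolding qv_def lw_def by simp


lemma qscale_one[simp]: "qscale 1 x = x" unfolding qscale_def by simp

lemma lw_ext: "i \<noteq> j \<Longrightarrow> (\<And>p. X (lp i j p) = Y (lp i j p)) \<Longrightarrow> (\<And>c. (\<forall>p. c \<noteq> lp i j p) \<Longrightarrow> X c = Y c) \<Longrightarrow> X = Y"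
proof (rule ext)
  fix c assume a: "i \<noteq> j" "\<And>p. X (lp i j p) = Y (lp i j p)" "\<And>c. (\<forall>p. c \<noteq> lp i j p) \<Longrightarrow> X c = Y c"
  show "X c = Y c"
  proof (cases "\<exists>p. c = lp i j p")
    case True then show ?thesis using a(2) by auto
  qed (use a(3) in blast)
qed

declare lp.simps[simp del]

definition ai :: "nat \<Rightarrow> nat \<Rightarrow> qelem" where
  "ai n i = qadd (qadd qone (qu i)) (qadd (qv i) (qmult n (qu i) (qv i)))"

lemma ai_lw_i:
  assumes "1 \<le> i" "i < n" "i \<noteq> j"
  shows "ai n i = qadd (qadd (lw i j (False,False,False,False)) (lw i j (True,False,False,False)))
                       (qadd (lw i j (False,False,True,False)) (lw i j (True,False,True,False)))"
  unfolding ai_def lw_one[of i j] lw_ui[of i j] lw_vi[of i j]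
  using assms by (simp add: lw_mult lp_basis Suc_le_eq)

lemma ai_lw_j:
  assumes "1 \<le> j" "j < n" "i \<noteq> j"
  shows "ai n j = qadd (qadd (lw i j (False,False,False,False)) (lw i j (False,True,False,False)))
                       (qadd (lw i j (False,False,False,True)) (lw i j (False,True,False,True)))"
  unfolding ai_def lw_one[of i j] lw_uj[of j i] lw_vj[of j i]
  using assms by (simp add: lw_mult lp_basis Suc_le_eq)

lemma ai_braid:
  assumes "1 \<le> i" "Suc i < n"
  shows "qmult n (ai n i) (qmult n (ai n (Suc i)) (ai n i)) = qmult n (ai n (Suc i)) (qmult n (ai n i) (ai n (Suc i)))"
    (is "?L = ?R")
proof -
  let ?j = "Suc i"
  have ij: "i \<noteq> ?j" "1 \<le> ?j" "?j < n" "i < n" "0 < i" using assms by auto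
  have E: "?L = qmult n (qadd (qadd (lw i ?j (False,False,False,False)) (lw i ?j (True,False,False,False)))
                       (qadd (lw i ?j (False,False,True,False)) (lw i ?j (True,False,True,False))))
     (qmult n (qadd (qadd (lw i ?j (False,False,False,False)) (lw i ?j (False,True,False,False)))
                       (qadd (lw i ?j (False,False,False,True)) (lw i ?j (False,True,False,True))))
      (qadd (qadd (lw i ?j (False,False,False,False)) (lw i ?j (True,False,False,False)))
                       (qadd (lw i ?j (False,False,True,False)) (lw i ?j (True,False,True,False)))))"
    "?R = qmult n 
     (qadd (qadd (lw i ?j (False,False,False,False)) (lw i ?j (False,True,False,False)))
                       (qadd (lw i ?j (False,False,False,True)) (lw i ?j (False,True,False,True))))
     (qmult n (qadd (qadd (lw i ?j (False,False,False,False)) (lw i ?j (True,False,False,False)))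
                       (qadd (lw i ?j (False,False,True,False)) (lw i ?j (True,False,True,False))))
     (qadd (qadd (lw i ?j (False,False,False,False)) (lw i ?j (False,True,False,False)))
                       (qadd (lw i ?j (False,False,False,True)) (lw i ?j (False,True,False,True)))))"
    using ai_lw_i[OF assms(1) ij(4) ij(1)] ai_lw_j[OF ij(2) ij(3) ij(1)] by simp_all
  show ?thesis unfolding E
    apply (simp add: qmult_qadd_left qmult_qadd_right qmult_qscale_left qmult_qscale_right lw_mult lp_basis ij assms)
    apply (rule lw_ext[OF ij(1)])
    subgoal for p by (cases p) (auto simp: qadd_def qscale_def lw_apply lp_inj ij)
    subgoal for c by (simp add: qadd_def qscale_def lw_apply)
    done
qed

lemma ai_comm:
  assumes "1 \<le> i" "Suc i < j" "j < n"
  shows "qmult n (ai n i) (ai n j) = qmult n (ai n j) (ai n i)"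
proof -
  have ij: "i \<noteq> j" "1 \<le> j" "j < n" "i < n" "0 < i" "0 < j" "\<not> j \<le> Suc i" using assms by auto
  show ?thesis
    unfolding ai_lw_i[OF assms(1) ij(4) ij(1)] ai_lw_j[OF ij(2) ij(3) ij(1)]
    apply (simp add: qmult_qadd_left qmult_qadd_right qmult_qscale_left qmult_qscale_right lw_mult lp_basis ij)
    apply (rule lw_ext[OF ij(1)])
    subgoal for p by (cases p) (auto simp: qadd_def qscale_def lw_apply lp_inj ij)
    subgoal for c by (simp add: qadd_def qscale_def lw_apply)
    done
qed

lemma ai_quad:
  assumes "1 \<le> i" "i < n"
  shows "qmult n (ai n i) (ai n i) = qadd (qscale 2 (ai n i)) (qscale (-4) qone)"
proof -
  have ij: "i \<noteq> Suc i" "0 < i" "i < n" using assms by auto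
  show ?thesis
    unfolding ai_lw_i[OF assms(1) assms(2) ij(1)] lw_one[of i "Suc i"]
    apply (simp add: qmult_qadd_left qmult_qadd_right qmult_qscale_left qmult_qscale_right lw_mult lp_basis ij)
    apply (rule lw_ext[OF ij(1)])
    subgoal for p by (cases p) (auto simp: qadd_def qscale_def lw_apply lp_inj ij)
    subgoal for c by (simp add: qadd_def qscale_def lw_apply)
    done
qed


definition hfb :: "nat \<Rightarrow> complex \<Rightarrow> (nat list \<Rightarrow> complex) \<Rightarrow> bool" where
  "hfb n q \<phi> \<longleftrightarrow> (\<forall>a b. set a \<subseteq> {1..<n} \<longrightarrow> set b \<subseteq> {1..<n} \<longrightarrow>
    (\<forall>i. 1 \<le> i \<and> Suc i < n \<longrightarrow> \<phi> (a @ [i, Suc i, i] @ b) = \<phi> (a @ [Suc i, i, Suc i] @ b)) \<and>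
    (\<forall>i j. 1 \<le> i \<and> Suc i < j \<and> j < n \<longrightarrow> \<phi> (a @ [i, j] @ b) = \<phi> (a @ [j, i] @ b)) \<and>
    (\<forall>i. 1 \<le> i \<and> i < n \<longrightarrow> \<phi> (a @ [i, i] @ b) = (q - 1) * \<phi> (a @ [i] @ b) + q * \<phi> (a @ b)))"

lemma hfb_braid: "hfb n q \<phi> \<Longrightarrow> set a \<subseteq> {1..<n} \<Longrightarrow> set b \<subseteq> {1..<n} \<Longrightarrow> 1 \<le> i \<Longrightarrow> Suc i < n \<Longrightarrow>
   \<phi> (a @ [i, Suc i, i] @ b) = \<phi> (a @ [Suc i, i, Suc i] @ b)"
  unfolding hfb_def by blast
lemma hfb_comm: "hfb n q \<phi> \<Longrightarrow> set a \<subseteq> {1..<n} \<Longrightarrow> set b \<subseteq> {1..<n} \<Longrightarrow> 1 \<le> i \<Longrightarrow> Suc i < j \<Longrightarrow> j < n \<Longrightarrow>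
   \<phi> (a @ [i, j] @ b) = \<phi> (a @ [j, i] @ b)"
  unfolding hfb_def by blast
lemma hfb_quad: "hfb n q \<phi> \<Longrightarrow> set a \<subseteq> {1..<n} \<Longrightarrow> set b \<subseteq> {1..<n} \<Longrightarrow> 1 \<le> i \<Longrightarrow> i < n \<Longrightarrow>
   \<phi> (a @ [i, i] @ b) = (q - 1) * \<phi> (a @ [i] @ b) + q * \<phi> (a @ b)"
  unfolding hfb_def by blast

lemma hfb_ctx:
  assumes "hfb n q \<phi>" "set a0 \<subseteq> {1..<n}" "set b0 \<subseteq> {1..<n}"
  shows "hfb n q (\<lambda>w. \<phi> (a0 @ w @ b0))"
  unfolding hfb_def
proof (intro allI impI conjI)
  fix a b assume ab: "set a \<subseteq> {1..<n}" "set b \<subseteq> {1..<n}"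
  have r: "set (a0 @ a) \<subseteq> {1..<n}" "set (b @ b0) \<subseteq> {1..<n}" using ab assms by auto
  fix i
  show "1 \<le> i \<and> Suc i < n \<Longrightarrow> \<phi> (a0 @ (a @ [i, Suc i, i] @ b) @ b0) = \<phi> (a0 @ (a @ [Suc i, i, Suc i] @ b) @ b0)"
    using hfb_braid[OF assms(1) r, of i] by simp
  show "1 \<le> i \<and> i < n \<Longrightarrow> \<phi> (a0 @ (a @ [i, i] @ b) @ b0) = (q - 1) * \<phi> (a0 @ (a @ [i] @ b) @ b0) + q * \<phi> (a0 @ (a @ b) @ b0)"
    using hfb_quad[OF assms(1) r, of i] by simp
  fix j
  show "1 \<le> i \<and> Suc i < j \<and> j < n \<Longrightarrow> \<phi> (a0 @ (a @ [i, j] @ b) @ b0) = \<phi> (a0 @ (a @ [j, i] @ b) @ b0)"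
    using hfb_comm[OF assms(1) r, of i j] by simp
qed

lemma comm_past:
  assumes "hfb n q \<phi>" "m < n" "set a \<subseteq> {1..<n}" "set b \<subseteq> {1..<n}" "\<forall>k\<in>set v. 1 \<le> k \<and> Suc k < m"
  shows "\<phi> (a @ [m] @ v @ b) = \<phi> (a @ v @ [m] @ b)"
  using assms(3,5)
proof (induction v arbitrary: a)
  case Nil then show ?case by simp
next
  case (Cons k v)
  have k: "1 \<le> k" "Suc k < m" using Cons.prems by auto
  have r: "set (v @ b) \<subseteq> {1..<n}" using Cons.prems assms(2,4) by force
  have "\<phi> (a @ [m] @ (k # v) @ b) = \<phi> (a @ [m, k] @ (v @ b))" by simp
  also have "\<dots> = \<phi> (a @ [k, m] @ (v @ b))" using hfb_comm[OF assms(1) Cons.prems(1) r k(1) k(2) assms(2)] by simp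
  also have "\<dots> = \<phi> ((a @ [k]) @ [m] @ v @ b)" by simp
  also have "\<dots> = \<phi> ((a @ [k]) @ v @ [m] @ b)"
    using Cons.IH[of "a @ [k]"] Cons.prems assms(2) k by auto
  finally show ?case by simp
qed

lemma count_split:
  assumes "m \<in> set w"
  shows "\<exists>a w'. w = a @ m # w' \<and> m \<notin> set a"
  using split_list_first[OF assms] by blast

lemma sub_lt: "set w \<subseteq> {1..(m::nat)} \<Longrightarrow> m \<notin> set w \<Longrightarrow> set w \<subseteq> {1..<m}"
proof
  fix x assume "set w \<subseteq> {1..m}" "m \<notin> set w" "x \<in> set w"
  then have "x \<in> {1..m}" "x \<noteq> m" by auto
  then show "x \<in> {1..<m}" by simp
qed

lemma S_lemma:
  "m < n \<Longrightarrow> hfb n q \<phi> \<Longrightarrow> (\<forall>w. set w \<subseteq> {1..<m} \<longrightarrow> \<phi> w = 0) \<Longrightarrow>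
   (1 \<le> m \<longrightarrow> (\<forall>x y. set x \<subseteq> {1..<m} \<longrightarrow> set y \<subseteq> {1..<m} \<longrightarrow> \<phi> (x @ [m] @ y) = 0)) \<Longrightarrow>
   (\<forall>w. set w \<subseteq> {1..m} \<longrightarrow> \<phi> w = 0)"
proof (induction m arbitrary: \<phi>)
  case 0
  then show ?case by auto
next
  case (Suc m')
  note outerIH = Suc.IH
  define m where "m = Suc m'"
  have mn: "m < n" "1 \<le> m" using Suc.prems unfolding m_def by auto
  have h1: "\<forall>w. set w \<subseteq> {1..<m} \<longrightarrow> \<phi> w = 0" using Suc.prems unfolding m_def by blast
  have h2: "\<forall>x y. set x \<subseteq> {1..<m} \<longrightarrow> set y \<subseteq> {1..<m} \<longrightarrow> \<phi> (x @ [m] @ y) = 0"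
    using Suc.prems unfolding m_def by auto
  have hf: "hfb n q \<phi>" using Suc.prems by blast
  have main: "\<forall>w. set w \<subseteq> {1..m} \<and> count_list w m \<le> k \<longrightarrow> \<phi> w = 0" for k
  proof (induction k)
    case 0
    show ?case
    proof (intro allI impI)
      fix w assume w: "set w \<subseteq> {1..m} \<and> count_list w m \<le> 0"
      then have "m \<notin> set w" by (simp add: count_list_0_iff)
      then have "set w \<subseteq> {1..<m}" using w sub_lt by blast
      then show "\<phi> w = 0" using h1 by blast
    qed
  next
    case (Suc k)
    show ?case
    proof (intro allI impI)
      fix w assume w: "set w \<subseteq> {1..m} \<and> count_list w m \<le> Suc k"
      show "\<phi> w = 0"
      proof (cases "m \<in> set w")
        case False
        then have "set w \<subseteq> {1..<m}" using w sub_lt by blast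
        then show ?thesis using h1 by blast
      next
        case True
        obtain a w' where aw: "w = a @ m # w'" "m \<notin> set a" using count_split[OF True] by (elim exE conjE)
        show ?thesis
        proof (cases "m \<in> set w'")
          case False
          have sw: "set w \<subseteq> {1..m}" using w by simp
          have "set a \<subseteq> {1..m}" "set w' \<subseteq> {1..m}" using sw unfolding aw by auto
          then have "set a \<subseteq> {1..<m}" "set w' \<subseteq> {1..<m}" using sub_lt aw(2) False by blast+
          then have "\<phi> (a @ [m] @ w') = 0" using h2 by blast
          then show ?thesis using aw by simp
        next
          case True
          obtain c b where cb: "w' = c @ m # b" "m \<notin> set c" using count_split[OF True] by (elim exE conjE)
          have wabc: "w = a @ [m] @ c @ [m] @ b" using aw cb by simp
          have cnt: "count_list a m + count_list b m + 1 \<le> k"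
            using w aw cb by (simp add: count_list_0_iff)
          have sw: "set w \<subseteq> {1..m}" using w by simp
          have ra': "set a \<subseteq> {1..m}" "set b \<subseteq> {1..m}" "set c \<subseteq> {1..m}"
            using sw unfolding wabc by auto
          have mnsub: "{1..m} \<subseteq> {1..<n}" using mn by auto
          have ra: "set a \<subseteq> {1..<n}" "set b \<subseteq> {1..<n}" "set c \<subseteq> {1..<n}"
            using ra' mnsub by blast+
          define \<psi> where "\<psi> v = \<phi> ((a @ [m]) @ v @ ([m] @ b))" for v
          have hpsi: "hfb n q \<psi>" unfolding \<psi>_def
            by (rule hfb_ctx[OF hf]) (use ra mn in auto)
          have small: "\<phi> u = 0" if "set u \<subseteq> {1..m}" "count_list u m \<le> k" for u
            using Suc.IH that by blast
          have p1: "\<forall>v. set v \<subseteq> {1..<m'} \<longrightarrow> \<psi> v = 0"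
          proof (intro allI impI)
            fix v assume v: "set v \<subseteq> {1..<m'}"
            have vc: "\<forall>k\<in>set v. 1 \<le> k \<and> Suc k < m" using v unfolding m_def by auto
            have vn: "set v \<subseteq> {1..<n}" "set v \<subseteq> {1..m}" "m \<notin> set v" using v mn unfolding m_def by auto
            have "\<psi> v = \<phi> (a @ [m] @ v @ ([m] @ b))" unfolding \<psi>_def by simp
            also have "\<dots> = \<phi> (a @ v @ [m] @ ([m] @ b))"
              by (rule comm_past[OF hf mn(1) ra(1) _ vc]) (use ra mn in auto)
            also have "\<dots> = \<phi> ((a @ v) @ [m, m] @ b)" by simp
            also have "\<dots> = (q - 1) * \<phi> ((a @ v) @ [m] @ b) + q * \<phi> ((a @ v) @ b)"
              by (rule hfb_quad[OF hf]) (use ra vn mn in auto)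
            also have "\<dots> = 0"
            proof -
              have "\<phi> ((a @ v) @ [m] @ b) = 0" using cnt vn ra' mn by (intro small) (auto simp: count_list_0_iff)
              moreover have "\<phi> ((a @ v) @ b) = 0" using cnt vn ra' mn by (intro small) (auto simp: count_list_0_iff)
              ultimately show ?thesis by simp
            qed
            finally show "\<psi> v = 0" .
          qed
          have p2: "1 \<le> m' \<longrightarrow> (\<forall>x y. set x \<subseteq> {1..<m'} \<longrightarrow> set y \<subseteq> {1..<m'} \<longrightarrow> \<psi> (x @ [m'] @ y) = 0)"
          proof (intro impI allI)
            fix x y assume m1: "1 \<le> m'" and xy: "set x \<subseteq> {1..<m'}" "set y \<subseteq> {1..<m'}"
            have xc: "\<forall>k\<in>set x. 1 \<le> k \<and> Suc k < m" "\<forall>k\<in>set y. 1 \<le> k \<and> Suc k < m"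
              using xy unfolding m_def by auto
            have xn: "set x \<subseteq> {1..<n}" "set y \<subseteq> {1..<n}" "m' < n" using xy mn unfolding m_def by auto
            have "\<psi> (x @ [m'] @ y) = \<phi> (a @ [m] @ x @ ([m'] @ y @ [m] @ b))" unfolding \<psi>_def by simp
            also have "\<dots> = \<phi> (a @ x @ [m] @ ([m'] @ y @ [m] @ b))"
              by (rule comm_past[OF hf mn(1) ra(1) _ xc(1)]) (use ra mn xn m1 in auto)
            also have "\<dots> = \<phi> ((a @ x @ [m, m']) @ y @ [m] @ b)" by simp
            also have "\<dots> = \<phi> ((a @ x @ [m, m']) @ [m] @ y @ b)"
              by (rule comm_past[OF hf mn(1) _ ra(2) xc(2), symmetric]) (use ra mn xn m1 in auto)
            also have "\<dots> = \<phi> ((a @ x) @ [Suc m', m', Suc m'] @ (y @ b))" unfolding m_def by simp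
            also have "\<dots> = \<phi> ((a @ x) @ [m', Suc m', m'] @ (y @ b))"
              by (rule hfb_braid[OF hf, symmetric]) (use ra mn xn m1 in \<open>auto simp: m_def\<close>)
            also have "\<dots> = 0"
            proof (rule small)
              show "set ((a @ x) @ [m', Suc m', m'] @ y @ b) \<subseteq> {1..m}"
                using ra' xy m1 unfolding m_def by auto
              have "m \<notin> set x" "m \<notin> set y" using xy unfolding m_def by auto
              then show "count_list ((a @ x) @ [m', Suc m', m'] @ y @ b) m \<le> k"
                using cnt unfolding m_def by (simp add: count_list_0_iff)
            qed
            finally show "\<psi> (x @ [m'] @ y) = 0" .
          qed
          have "\<forall>w. set w \<subseteq> {1..m'} \<longrightarrow> \<psi> w = 0"
            by (rule outerIH[OF _ hpsi p1 p2]) (use mn in \<open>simp add: m_def\<close>)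
          moreover have "set c \<subseteq> {1..m'}" using sub_lt[OF ra'(3) cb(2)] unfolding m_def atLeastLessThanSuc_atLeastAtMost .
          ultimately have "\<psi> c = 0" by blast
          then show ?thesis unfolding \<psi>_def wabc by simp
        qed
      qed
    qed
  qed
  show ?case
  proof (intro allI impI)
    fix w assume "set w \<subseteq> {1..Suc m'}"
    then show "\<phi> w = 0" using main[of "count_list w m"] unfolding m_def by blast
  qed
qed


lemma uniq_aux:
  assumes hf: "hfb n q D"
    and cyc: "\<forall>a b. set a \<subseteq> {1..<n} \<longrightarrow> set b \<subseteq> {1..<n} \<longrightarrow> D (a @ b) = D (b @ a)"
    and D0: "D [] = 0"
    and mk: "\<forall>m x. 1 \<le> m \<and> m < n \<and> set x \<subseteq> {1..<m} \<longrightarrow> D (x @ [m]) = z * D x"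
  shows "m < n \<Longrightarrow> \<forall>w. set w \<subseteq> {1..m} \<longrightarrow> D w = 0"
proof (induction m)
  case 0
  then show ?case using D0 by auto
next
  case (Suc m')
  have IH: "\<forall>w. set w \<subseteq> {1..m'} \<longrightarrow> D w = 0" using Suc by simp
  show ?case
  proof (rule S_lemma[OF Suc.prems hf])
    show "\<forall>w. set w \<subseteq> {1..<Suc m'} \<longrightarrow> D w = 0" using IH by (simp add: atLeastLessThanSuc_atLeastAtMost)
    show "1 \<le> Suc m' \<longrightarrow> (\<forall>x y. set x \<subseteq> {1..<Suc m'} \<longrightarrow> set y \<subseteq> {1..<Suc m'} \<longrightarrow> D (x @ [Suc m'] @ y) = 0)"
    proof (intro impI allI)
      fix x y assume xy: "set x \<subseteq> {1..<Suc m'}" "set y \<subseteq> {1..<Suc m'}"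
      have sub: "{1..<Suc m'} \<subseteq> {1..<n}" using Suc.prems by auto
      have r: "set (x @ [Suc m']) \<subseteq> {1..<n}" "set y \<subseteq> {1..<n}" using xy sub Suc.prems by auto
      have "D (x @ [Suc m'] @ y) = D ((x @ [Suc m']) @ y)" by simp
      also have "\<dots> = D (y @ (x @ [Suc m']))" using cyc r by blast
      also have "\<dots> = D ((y @ x) @ [Suc m'])" by simp
      also have "\<dots> = z * D (y @ x)"
      proof -
        have "set (y @ x) \<subseteq> {1..<Suc m'}" using xy by simp
        moreover have "1 \<le> Suc m'" by simp
        ultimately show ?thesis using mk Suc.prems by blast
      qed
      also have "D (y @ x) = 0" using IH xy by (simp add: atLeastLessThanSuc_atLeastAtMost)
      finally show "D (x @ [Suc m'] @ y) = 0" by simp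
    qed
  qed
qed

lemma uniq:
  assumes hf: "hfb n q D"
    and cyc: "\<forall>a b. set a \<subseteq> {1..<n} \<longrightarrow> set b \<subseteq> {1..<n} \<longrightarrow> D (a @ b) = D (b @ a)"
    and D0: "D [] = 0"
    and mk: "\<forall>m x. 1 \<le> m \<and> m < n \<and> set x \<subseteq> {1..<m} \<longrightarrow> D (x @ [m]) = z * D x"
    and w: "set w \<subseteq> {1..<n}"
  shows "D w = 0"
proof (cases n)
  case 0 then show ?thesis using w D0 by simp
next
  case (Suc n')
  then have "set w \<subseteq> {1..n'}" using w by (simp add: atLeastLessThanSuc_atLeastAtMost)
  then show ?thesis using uniq_aux[OF hf cyc D0 mk, of n'] Suc by simp
qed


lemma q6_eq: "q6 = Complex (1/2) (sqrt 3 / 2)"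
proof -
  have "2 * complex_of_real pi * \<i> / 6 = \<i> * complex_of_real (pi/3)" by (simp add: field_simps)
  then have "q6 = exp (\<i> * complex_of_real (pi/3))" unfolding q6_def by simp
  also have "\<dots> = cis (pi/3)" by (simp add: cis_conv_exp)
  also have "\<dots> = Complex (1/2) (sqrt 3 / 2)" by (simp add: cis.code cos_60 sin_60)
  finally show ?thesis .
qed
lemma q6_quad: "q6^2 = q6 - 1"
  by (simp add: q6_eq complex_eq_iff power2_eq_square)
lemma q6_nz: "q6 \<noteq> 0" by (simp add: q6_eq complex_eq_iff)
lemma q6_1nz: "1 + q6 \<noteq> 0" by (simp add: q6_eq complex_eq_iff)

lemma qscale_qscale[simp]: "qscale a (qscale b x) = qscale (a * b) x"
  unfolding qscale_def by (simp add: mult.assoc)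

lemma supp_qadd: "supp n x \<Longrightarrow> supp n y \<Longrightarrow> supp n (qadd x y)" unfolding supp_def qadd_def by simp
lemma supp_qscale: "supp n x \<Longrightarrow> supp n (qscale a x)" unfolding supp_def qscale_def by simp
lemma supp_lw: "lp i j p \<in> qbasis n \<Longrightarrow> supp n (lw i j p)" unfolding supp_def lw_apply by auto

lemma qs_ai: "qs q n i = qscale (-1 / (2 * q)) (ai n i)" unfolding qs_def ai_def by simp

lemma supp_ai: "1 \<le> i \<Longrightarrow> i < n \<Longrightarrow> supp n (ai n i)"
  unfolding ai_def by (intro supp_qadd supp_qone qmult_supp) (auto simp: supp_def qu_def qv_def qbw_def qbasis_def)

lemma supp_qs: "1 \<le> i \<Longrightarrow> i < n \<Longrightarrow> supp n (qs q n i)"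
  unfolding qs_ai by (intro supp_qscale supp_ai)

lemma qphi_Nil[simp]: "qphi q n [] = qone" unfolding qphi_def by simp
lemma qphi_Cons[simp]: "qphi q n (i # w) = qmult n (qs q n i) (qphi q n w)" unfolding qphi_def by simp

lemma supp_qphi: "supp n (qphi q n w)"
  by (cases w) (auto simp: supp_qone qmult_supp)

lemma qphi_append: "qphi q n (a @ b) = qmult n (qphi q n a) (qphi q n b)"
  by (induction a) (simp_all add: qmult_one_left supp_qphi qmult_assoc)

lemma qphi_single: "1 \<le> i \<Longrightarrow> i < n \<Longrightarrow> qphi q n [i] = qs q n i"
  by (simp add: qmult_one_right supp_qs)

lemma qphi_braid:
  assumes "1 \<le> i" "Suc i < n"
  shows "qphi q n [i, Suc i, i] = qphi q n [Suc i, i, Suc i]"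
proof -
  have s: "qphi q n [i, Suc i, i] = qmult n (qs q n i) (qmult n (qs q n (Suc i)) (qs q n i))"
      "qphi q n [Suc i, i, Suc i] = qmult n (qs q n (Suc i)) (qmult n (qs q n i) (qs q n (Suc i)))"
    using assms by (simp_all add: qmult_one_right supp_qs)
  show ?thesis unfolding s qs_ai qmult_qscale_left qmult_qscale_right qscale_qscale ai_braid[OF assms] ..
qed

lemma qphi_comm:
  assumes "1 \<le> i" "Suc i < j" "j < n"
  shows "qphi q n [i, j] = qphi q n [j, i]"
proof -
  have s: "qphi q n [i, j] = qmult n (qs q n i) (qs q n j)"
      "qphi q n [j, i] = qmult n (qs q n j) (qs q n i)"
    using assms by (simp_all add: qmult_one_right supp_qs)
  show ?thesis unfolding s qs_ai qmult_qscale_left qmult_qscale_right qscale_qscale ai_comm[OF assms]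
    by (simp add: mult.commute)
qed

lemma cfact1:
  fixes q :: complex assumes q: "q*q = q - 1" and nz: "q \<noteq> 0"
  shows "(-1/(2*q)) * (-1/(2*q)) * 2 = (q - 1) * (-1/(2*q))"
proof -
  have "(-1/(2*q)) * (-1/(2*q)) * 2 = 1 / (2 * (q*q))" using nz by (simp add: field_simps)
  also have "\<dots> = 1 / (2 * (q - 1))" by (simp add: q)
  also have "\<dots> = (q - 1) * (-1/(2*q))"
  proof -
    have "q - 1 \<noteq> 0"
    proof
      assume "q - 1 = 0" then have "q = 1" by simp
      with q show False by simp
    qed
    then have "1 / (2 * (q - 1)) - (q - 1) * (-1/(2*q)) = (q + (q-1)*(q-1)) / (2*q*(q-1))"
      using nz by (simp add: field_simps)
    also have "q + (q-1)*(q-1) = q*q - q + 1" by (simp add: algebra_simps)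
    also have "\<dots> = 0" using q by simp
    finally have "1 / (2 * (q - 1)) - (q - 1) * (-1/(2*q)) = 0" by simp
    then show ?thesis by (simp only: right_minus_eq)
  qed
  finally show ?thesis .
qed
lemma cfact2:
  fixes q :: complex assumes q: "q*q = q - 1" and nz: "q \<noteq> 0"
  shows "(-1/(2*q)) * (-1/(2*q)) * (-4) = q"
proof -
  have "(-1/(2*q)) * (-1/(2*q)) * (-4) = - 1 / (q*q)" using nz by (simp add: field_simps)
  also have "\<dots> = q"
  proof -
    have "q * q * q = q * (q * q)" by (simp add: mult.assoc)
    also have "\<dots> = q * (q - 1)" by (simp add: q)
    also have "\<dots> = q * q - q" by (simp add: algebra_simps)
    also have "\<dots> = -1" by (simp add: q)
    finally have "q * q * q = -1" .
    then show ?thesis using nz by (simp add: field_simps)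
  qed
  finally show ?thesis .
qed
lemma c_facts:
  defines "c \<equiv> -1 / (2 * q6)"
  shows "c * c * 2 = (q6 - 1) * c" "c * c * (-4) = q6"
proof -
  have q: "q6 * q6 = q6 - 1" using q6_quad by (simp add: power2_eq_square)
  show "c * c * 2 = (q6 - 1) * c" unfolding c_def by (rule cfact1[OF q q6_nz])
  show "c * c * (-4) = q6" unfolding c_def by (rule cfact2[OF q q6_nz])
qed

lemma qphi_quad:
  assumes "1 \<le> i" "i < n"
  shows "qphi q6 n [i, i] = qadd (qscale (q6 - 1) (qphi q6 n [i])) (qscale q6 (qphi q6 n []))"
proof -
  define c where "c = -1 / (2 * q6)"
  have "qphi q6 n [i, i] = qmult n (qs q6 n i) (qs q6 n i)"
    using assms by (simp add: qmult_one_right supp_qs)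
  also have "\<dots> = qscale (c * c) (qadd (qscale 2 (ai n i)) (qscale (-4) qone))"
    using assms by (simp only: qs_ai qmult_qscale_left qmult_qscale_right ai_quad c_def qscale_qscale)
  finally have s: "qphi q6 n [i, i] = qscale (c * c) (qadd (qscale 2 (ai n i)) (qscale (-4) qone))" .
  have s2: "qphi q6 n [i] = qscale c (ai n i)" unfolding qphi_single[OF assms] qs_ai c_def ..
  show ?thesis unfolding s s2 qphi_Nil
  proof (rule ext)
    fix x
    have "c * c * (2 * ai n i x + - 4 * qone x) = (c * c * 2) * ai n i x + (c * c * (-4)) * qone x"
      by (simp add: algebra_simps)
    also have "\<dots> = (q6 - 1) * c * ai n i x + q6 * qone x" unfolding c_def c_facts ..
    finally show "qscale (c * c) (qadd (qscale 2 (ai n i)) (qscale (- 4) qone)) x =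
        qadd (qscale (q6 - 1) (qscale c (ai n i))) (qscale q6 qone) x"
      by (simp add: qadd_def qscale_def mult.assoc)
  qed
qed


definition psupp :: "(nat set \<times> nat set \<Rightarrow> bool) \<Rightarrow> qelem \<Rightarrow> bool" where
  "psupp P x \<longleftrightarrow> (\<forall>p. x p \<noteq> 0 \<longrightarrow> P p)"

lemma psupp_qone: "P ({},{}) \<Longrightarrow> psupp P qone"
  unfolding psupp_def qone_def qbw_def by auto
lemma psupp_qbw: "P (E, N) \<Longrightarrow> psupp P (qbw E N)"
  unfolding psupp_def qbw_def by auto
lemma psupp_qadd: "psupp P x \<Longrightarrow> psupp P y \<Longrightarrow> psupp P (qadd x y)"
  unfolding psupp_def qadd_def by (metis add.left_neutral)
lemma psupp_qscale: "psupp P x \<Longrightarrow> psupp P (qscale a x)"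
  unfolding psupp_def qscale_def by auto
lemma psupp_qmult:
  assumes cl: "\<And>a b. P a \<Longrightarrow> P b \<Longrightarrow> P (psymd a b)" and x: "psupp P x" and y: "psupp P y"
  shows "psupp P (qmult n x y)"
  unfolding psupp_def
proof (intro allI impI)
  fix c assume nz: "qmult n x y c \<noteq> 0"
  then have cB: "c \<in> qbasis n" by (auto simp: qmult_alt split: if_splits)
  then have "(\<Sum>p\<in>qbasis n. (-1) ^ qsign_exp p (psymd p c) * x p * y (psymd p c)) \<noteq> 0"
    using nz by (simp add: qmult_alt)
  then obtain p where "(-1) ^ qsign_exp p (psymd p c) * x p * y (psymd p c) \<noteq> 0"
    by (meson sum.neutral)
  then have "x p \<noteq> 0" "y (psymd p c) \<noteq> 0" by auto
  then have "P p" "P (psymd p c)" using x y unfolding psupp_def by blast+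
  then have "P (psymd p (psymd p c))" by (rule cl)
  then show "P c" by simp
qed

definition lowP :: "nat \<Rightarrow> nat set \<times> nat set \<Rightarrow> bool" where
  "lowP m p \<longleftrightarrow> (\<forall>k \<in> fst p \<union> snd p. k < m)"
definition mP :: "nat \<Rightarrow> nat set \<times> nat set \<Rightarrow> bool" where
  "mP m p \<longleftrightarrow> fst p \<subseteq> {m} \<and> snd p \<subseteq> {m}"

lemma lowP_cl: "lowP m a \<Longrightarrow> lowP m b \<Longrightarrow> lowP m (psymd a b)"
  unfolding lowP_def psymd_def symd_def by auto
lemma mP_cl: "mP m a \<Longrightarrow> mP m b \<Longrightarrow> mP m (psymd a b)"
  unfolding mP_def psymd_def symd_def by auto

lemma Tr_local:
  assumes x: "psupp (mP m) x" and y: "psupp (lowP m) y"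
  shows "Tr (qmult n x y) = x ({},{}) * Tr y"
proof -
  have "Tr (qmult n x y) = (\<Sum>p\<in>qbasis n. (-1) ^ qsign_exp p p * x p * y p)" by (rule Tr_qmult)
  also have "\<dots> = (\<Sum>p\<in>qbasis n. if p = ({},{}) then x p * y p else 0)"
  proof (rule sum.cong[OF refl])
    fix p
    show "(-1) ^ qsign_exp p p * x p * y p = (if p = ({},{}) then x p * y p else 0)"
    proof (cases "p = ({},{})")
      case False
      show ?thesis
      proof (cases "x p = 0")
        case False
        then have "mP m p" using x unfolding psupp_def by blast
        then have "m \<in> fst p \<union> snd p" using \<open>p \<noteq> ({},{})\<close> unfolding mP_def
          by (cases p) (auto simp: subset_singleton_iff)
        then have "\<not> lowP m p" unfolding lowP_def by auto
        then have "y p = 0" using y unfolding psupp_def by blast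
        then show ?thesis using \<open>p \<noteq> ({},{})\<close> by simp
      qed (use \<open>p \<noteq> ({},{})\<close> in simp)
    qed simp
  qed
  also have "\<dots> = x ({},{}) * y ({},{})" by (simp add: sum.delta')
  finally show ?thesis unfolding Tr_def .
qed

lemma lowP_qs: "i < m \<Longrightarrow> psupp (lowP m) (qs q n i)"
  unfolding qs_def qu_def qv_def
  by (intro psupp_qscale psupp_qadd psupp_qone psupp_qbw psupp_qmult lowP_cl) (auto simp: lowP_def)

lemma lowP_qphi: "set w \<subseteq> {1..<m} \<Longrightarrow> psupp (lowP m) (qphi q n w)"
proof (induction w)
  case Nil then show ?case by (simp add: psupp_qone lowP_def)
next
  case (Cons i w)
  then show ?case by (simp, intro psupp_qmult lowP_cl lowP_qs) auto
qed

lemma mP_qs: "psupp (mP m) (qs q n m)"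
  unfolding qs_def qu_def qv_def
  by (intro psupp_qscale psupp_qadd psupp_qone psupp_qbw psupp_qmult mP_cl) (auto simp: mP_def)

lemma mP_qf: "psupp (mP m) (qf q n m)"
  unfolding qf_def by (intro psupp_qscale psupp_qadd psupp_qone mP_qs) (auto simp: mP_def)

lemma qs_at0:
  assumes "1 \<le> m" "m < n"
  shows "qs q n m ({},{}) = -1 / (2 * q)"
proof -
  have "m \<noteq> Suc m" by simp
  show ?thesis unfolding qs_ai ai_lw_i[OF assms \<open>m \<noteq> Suc m\<close>]
    by (simp add: qscale_def qadd_def lw_apply lp.simps)
qed

lemma T_markov:
  assumes "1 \<le> m" "m < n" "set x \<subseteq> {1..<m}"
  shows "Tr (qphi q n (x @ [m])) = -1 / (2 * q) * Tr (qphi q n x)"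
proof -
  have "Tr (qphi q n (x @ [m])) = Tr (qmult n (qphi q n x) (qs q n m))"
    unfolding qphi_append qphi_single[OF assms(1,2)] ..
  also have "\<dots> = Tr (qmult n (qs q n m) (qphi q n x))" by (rule Tr_comm)
  also have "\<dots> = qs q n m ({},{}) * Tr (qphi q n x)"
    by (rule Tr_local[OF mP_qs lowP_qphi[OF assms(3)]])
  finally show ?thesis using qs_at0[OF assms(1,2)] by simp
qed

lemma qsubalg_low: "b \<in> qsubalg n k \<Longrightarrow> psupp (lowP k) b"
proof (induction rule: qsubalg.induct)
  case one then show ?case by (simp add: psupp_qone lowP_def)
next
  case (genu i) then show ?case unfolding qu_def by (intro psupp_qbw) (auto simp: lowP_def)
next
  case (genv i) then show ?case unfolding qv_def by (intro psupp_qbw) (auto simp: lowP_def)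
next
  case (add x y) then show ?case by (blast intro: psupp_qadd)
next
  case (scale x a) then show ?case by (blast intro: psupp_qscale)
next
  case (mult x y) then show ?case by (blast intro: psupp_qmult lowP_cl)
qed


lemma T_ctx: "Tr (qphi q n (a @ x @ b)) = Tr (qmult n (qphi q n a) (qmult n (qphi q n x) (qphi q n b)))"
  by (simp add: qphi_append)

lemma posw_rng: "set w \<subseteq> {1..<n} \<Longrightarrow> posw w"
  unfolding posw_def by auto

lemma q6_inv: "1 / q6 = 1 - q6"
proof -
  have q: "q6 * q6 = q6 - 1" using q6_quad by (simp add: power2_eq_square)
  have "(1 - q6) * q6 = q6 - q6 * q6" by (simp add: algebra_simps)
  also have "\<dots> = 1" by (simp add: q)
  finally have "(1 - q6) * q6 = 1" .
  then have "1 - q6 = 1 / q6" using q6_nz by (simp add: eq_divide_eq)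
  then show ?thesis by simp
qed

lemma scal1: "-1 / (2 * q6) = (q6 - 1) / 2"
proof -
  have "-1 / (2 * q6) = - (1 / q6) / 2" by simp
  also have "\<dots> = (q6 - 1) / 2" unfolding q6_inv by (simp add: field_simps)
  finally show ?thesis .
qed

lemma scal2: "(q6 - (-1 / (2 * q6))) / (1 + q6) = 1 / 2"
proof -
  have "q6 - (-1 / (2 * q6)) = q6 + (1 / q6) / 2" by simp
  also have "\<dots> = (1 + q6) / 2" unfolding q6_inv by (simp add: field_simps)
  finally show ?thesis using q6_1nz by simp
qed

theorem mainTheorem4:
  fixes n :: nat
  assumes "2 \<le> n"
  shows "(\<forall>\<tau>. markov_trace q6 (1/2) \<tau> \<longrightarrow>
            (\<forall>w. set w \<subseteq> {1..<n} \<longrightarrow> Tr (qphi q6 n w) = \<tau> w))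
       \<and> Tr (qf q6 n (n - 1)) = 1/2
       \<and> (\<forall>b \<in> qsubalg n (n - 1).
            Tr (qmult n (qf q6 n (n - 1)) b) = Tr (qf q6 n (n - 1)) * Tr b)"
proof (intro conjI ballI allI impI)
  have n1: "1 \<le> n - 1" "n - 1 < n" using assms by auto
  have "qf q6 n (n - 1) ({},{}) = 1 / (1 + q6) * (q6 * 1 + (-1) * qs q6 n (n - 1) ({},{}))"
    by (simp add: qf_def qscale_def qadd_def qone_def qbw_def)
  also have "\<dots> = (q6 - (-1 / (2 * q6))) / (1 + q6)" unfolding qs_at0[OF n1] by simp
  also have "\<dots> = 1 / 2" by (rule scal2)
  finally have trf: "Tr (qf q6 n (n - 1)) = 1 / 2" unfolding Tr_def .
  then show "Tr (qf q6 n (n - 1)) = 1 / 2" .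
  fix b assume "b \<in> qsubalg n (n - 1)"
  then show "Tr (qmult n (qf q6 n (n - 1)) b) = Tr (qf q6 n (n - 1)) * Tr b"
    using Tr_local[OF mP_qf qsubalg_low] unfolding Tr_def by simp
next
  fix \<tau> w assume mt: "markov_trace q6 (1/2) \<tau>" and w: "set w \<subseteq> {1..<n}"
  define T where "T w = Tr (qphi q6 n w)" for w
  define D where "D w = \<tau> w - T w" for w
  have hf: "hecke_functional q6 \<tau>" and t0: "\<tau> [] = 1"
    and tc: "\<forall>a b. posw a \<and> posw b \<longrightarrow> \<tau> (a @ b) = \<tau> (b @ a)"
    and tm: "\<forall>n x. 1 \<le> n \<and> set x \<subseteq> {1..<n} \<longrightarrow> (q6 * \<tau> x - \<tau> (x @ [n])) / (1 + q6) = 1/2 * \<tau> x"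
    using mt unfolding markov_trace_def by blast+
  have hfD: "hfb n q6 D"
    unfolding hfb_def
  proof (intro allI impI conjI)
    fix a b assume ab: "set a \<subseteq> {1..<n}" "set b \<subseteq> {1..<n}"
    have pab: "posw a" "posw b" using ab posw_rng by auto
    fix i
    assume i: "1 \<le> i \<and> Suc i < n"
    have "\<tau> (a @ [i, Suc i, i] @ b) = \<tau> (a @ [Suc i, i, Suc i] @ b)"
      using hf pab i unfolding hecke_functional_def by blast
    moreover have "T (a @ [i, Suc i, i] @ b) = T (a @ [Suc i, i, Suc i] @ b)"
      unfolding T_def T_ctx using qphi_braid i by simp
    ultimately show "D (a @ [i, Suc i, i] @ b) = D (a @ [Suc i, i, Suc i] @ b)" unfolding D_def by simp
  next
    fix a b assume ab: "set a \<subseteq> {1..<n}" "set b \<subseteq> {1..<n}"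
    have pab: "posw a" "posw b" using ab posw_rng by auto
    fix i j
    assume i: "1 \<le> i \<and> Suc i < j \<and> j < n"
    have "\<tau> (a @ [i, j] @ b) = \<tau> (a @ [j, i] @ b)"
      using hf pab i unfolding hecke_functional_def by (metis le_add1 le_trans less_imp_le_nat plus_1_eq_Suc)
    moreover have "T (a @ [i, j] @ b) = T (a @ [j, i] @ b)"
    proof -
      have e: "qphi q6 n [i, j] = qphi q6 n [j, i]" using i by (intro qphi_comm) auto
      show ?thesis unfolding T_def T_ctx e ..
    qed
    ultimately show "D (a @ [i, j] @ b) = D (a @ [j, i] @ b)" unfolding D_def by simp
  next
    fix a b assume ab: "set a \<subseteq> {1..<n}" "set b \<subseteq> {1..<n}"
    have pab: "posw a" "posw b" using ab posw_rng by auto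
    fix i
    assume i: "1 \<le> i \<and> i < n"
    have e1: "\<tau> (a @ [i, i] @ b) = (q6 - 1) * \<tau> (a @ [i] @ b) + q6 * \<tau> (a @ b)"
      using hf pab i unfolding hecke_functional_def by blast
    have e2: "T (a @ [i, i] @ b) = (q6 - 1) * T (a @ [i] @ b) + q6 * T (a @ [] @ b)"
      unfolding T_def T_ctx using i
      by (simp only: qphi_quad qmult_qadd_left qmult_qadd_right qmult_qscale_left qmult_qscale_right Tr_qadd Tr_qscale)
    have e3: "T (a @ [] @ b) = T (a @ b)" by simp
    show "D (a @ [i, i] @ b) = (q6 - 1) * D (a @ [i] @ b) + q6 * D (a @ b)"
      unfolding D_def e1 e2 e3 by (simp add: algebra_simps)
  qed
  have cyc: "\<forall>a b. set a \<subseteq> {1..<n} \<longrightarrow> set b \<subseteq> {1..<n} \<longrightarrow> D (a @ b) = D (b @ a)"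
  proof (intro allI impI)
    fix a b assume ab: "set a \<subseteq> {1..<n}" "set b \<subseteq> {1..<n}"
    have "\<tau> (a @ b) = \<tau> (b @ a)" using tc posw_rng ab by blast
    moreover have "T (a @ b) = T (b @ a)" unfolding T_def qphi_append by (rule Tr_comm)
    ultimately show "D (a @ b) = D (b @ a)" unfolding D_def by simp
  qed
  have D0: "D [] = 0" unfolding D_def T_def using t0 by (simp add: Tr_def qone_def qbw_def)
  have mk: "\<forall>m x. 1 \<le> m \<and> m < n \<and> set x \<subseteq> {1..<m} \<longrightarrow> D (x @ [m]) = ((q6 - 1) / 2) * D x"
  proof (intro allI impI)
    fix m x assume mx: "1 \<le> m \<and> m < n \<and> set x \<subseteq> {1..<m}"
    have "(q6 * \<tau> x - \<tau> (x @ [m])) / (1 + q6) = 1/2 * \<tau> x" using tm mx by blast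
    then have "q6 * \<tau> x - \<tau> (x @ [m]) = (1 + q6) / 2 * \<tau> x" using q6_1nz by (simp add: field_simps)
    then have t: "\<tau> (x @ [m]) = ((q6 - 1) / 2) * \<tau> x" by (simp add: algebra_simps)
    have "T (x @ [m]) = -1 / (2 * q6) * T x" unfolding T_def using T_markov mx by blast
    then have t2: "T (x @ [m]) = ((q6 - 1) / 2) * T x" unfolding scal1 .
    show "D (x @ [m]) = ((q6 - 1) / 2) * D x" unfolding D_def t t2 by (simp add: right_diff_distrib)
  qed
  have "D w = 0" by (rule uniq[OF hfD cyc D0 mk w])
  then show "Tr (qphi q6 n w) = \<tau> w" unfolding D_def T_def by simp
qed


end
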